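(* Let $G$ be a graph on $n$ vertices of tree-width $w$, and suppose that its complement $\overline{G}$ is closed under the Bondy–Chvátal closure, i.e. for every two distinct vertices $u,v$ that are non-adjacent in $\overline{G}$ we have $\deg_{\overline{G}}(u)+\deg_{\overline{G}}(v)<n$. Then the neighborhood diversity of $\overline{G}$ is at most $2^{k}+k$, where $k=2(w^2+w)$.
   Context: All graphs are finite and simple. The complement $\overline{G}$ of a graph $G=(V,E)$ is the graph $(V,\binom{V}{2}\setminus E)$. Tree-width: a tree decomposition of $G$ is a pair $(T,\{X_i\}_{i\in I})$ with $T=(I,F)$ a tree and bags $X_i\subseteq V(G)$ such that every vertex lies in some bag, every edge has both endpoints in some bag, and for each vertex $v$ the nodes whose bags contain $v$ induce a subtree of $T$; its width is $\max_i|X_i|-1$, and the tree-width of $G$ is the minimum width over all tree decompositions. The neighborhood diversity of a graph $H$ is the minimum size of a partition of $V(H)$ into classes such that any two vertices $v,v'$ in the same class satisfy $N(v)\setminus\{v'\}=N(v')\setminus\{v\}$. *)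

theory Defs
  imports Main
begin

definition simple_graph :: "'a set \<Rightarrow> 'a set set \<Rightarrow> bool" where
  "simple_graph V E \<longleftrightarrow> finite V \<and> (\<forall>e\<in>E. e \<subseteq> V \<and> card e = 2)"

definition complement_edges :: "'a set \<Rightarrow> 'a set set \<Rightarrow> 'a set set" where
  "complement_edges V E = {{u, v} | u v. u \<in> V \<and> v \<in> V \<and> u \<noteq> v} - E"

definition degree :: "'a set set \<Rightarrow> 'a \<Rightarrow> nat" where
  "degree E v = card {e \<in> E. v \<in> e}"

definition neighbors :: "'a set set \<Rightarrow> 'a \<Rightarrow> 'a set" where
  "neighbors E v = {u. {u, v} \<in> E \<and> u \<noteq> v}"

definition is_walk :: "'a set \<Rightarrow> 'a set set \<Rightarrow> 'a list \<Rightarrow> bool" where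
  "is_walk V E p \<longleftrightarrow> p \<noteq> [] \<and> set p \<subseteq> V \<and>
     (\<forall>i. Suc i < length p \<longrightarrow> {p ! i, p ! Suc i} \<in> E)"

definition connected_graph :: "'a set \<Rightarrow> 'a set set \<Rightarrow> bool" where
  "connected_graph V E \<longleftrightarrow> (\<forall>u\<in>V. \<forall>v\<in>V. \<exists>p. is_walk V E p \<and> hd p = u \<and> last p = v)"

definition induced_edges :: "'a set set \<Rightarrow> 'a set \<Rightarrow> 'a set set" where
  "induced_edges E S = {e \<in> E. e \<subseteq> S}"

definition is_tree :: "'b set \<Rightarrow> 'b set set \<Rightarrow> bool" where
  "is_tree I F \<longleftrightarrow> simple_graph I F \<and> I \<noteq> {} \<and> connected_graph I F \<and> card F + 1 = card I"

definition tree_decomposition ::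
  "'a set \<Rightarrow> 'a set set \<Rightarrow> 'b set \<Rightarrow> 'b set set \<Rightarrow> ('b \<Rightarrow> 'a set) \<Rightarrow> bool" where
  "tree_decomposition V E I F X \<longleftrightarrow>
     is_tree I F \<and> (\<forall>i\<in>I. X i \<subseteq> V) \<and>
     (\<forall>v\<in>V. \<exists>i\<in>I. v \<in> X i) \<and>
     (\<forall>e\<in>E. \<exists>i\<in>I. e \<subseteq> X i) \<and>
     (\<forall>v\<in>V. connected_graph {i\<in>I. v \<in> X i} (induced_edges F {i\<in>I. v \<in> X i}))"

definition td_width :: "'b set \<Rightarrow> ('b \<Rightarrow> 'a set) \<Rightarrow> nat" where
  "td_width I X = Max ((\<lambda>i. card (X i)) ` I) - 1"

(* tree-width; tree index nodes drawn from nat (any finite tree is isomorphic to one on nat) *)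
definition treewidth :: "'a set \<Rightarrow> 'a set set \<Rightarrow> nat" where
  "treewidth V E = (LEAST w. \<exists>(I::nat set) F X. tree_decomposition V E I F X \<and> td_width I X = w)"

definition nd_partition :: "'a set \<Rightarrow> 'a set set \<Rightarrow> 'a set set \<Rightarrow> bool" where
  "nd_partition V E P \<longleftrightarrow> (\<forall>C\<in>P. C \<noteq> {}) \<and> \<Union>P = V \<and>
     (\<forall>C\<in>P. \<forall>D\<in>P. C \<noteq> D \<longrightarrow> C \<inter> D = {}) \<and>
     (\<forall>C\<in>P. \<forall>v\<in>C. \<forall>v'\<in>C. neighbors E v - {v'} = neighbors E v' - {v})"

definition neighborhood_diversity :: "'a set \<Rightarrow> 'a set set \<Rightarrow> nat" where
  "neighborhood_diversity V E = (LEAST k. \<exists>P. nd_partition V E P \<and> card P = k)"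

end

theory Submission
  imports Defs
begin

lemma handshake:
  assumes "finite A" "finite F" "\<forall>e\<in>F. e \<subseteq> A \<and> card e = 2"
  shows "(\<Sum>i\<in>A. card {e\<in>F. i\<in>e}) = 2 * card F"
proof -
  have "(\<Sum>i\<in>A. card {e\<in>F. i\<in>e}) = (\<Sum>i\<in>A. \<Sum>e\<in>F. (of_bool (i\<in>e)::nat))"
    using assms(2) by (intro sum.cong) (auto simp: Int_def)
  also have "\<dots> = (\<Sum>e\<in>F. \<Sum>i\<in>A. (of_bool (i\<in>e)::nat))" by (rule sum.swap)
  also have "\<dots> = (\<Sum>e\<in>F. 2)"
  proof (intro sum.cong refl)
    fix e assume "e \<in> F"
    then have "A \<inter> {i. i \<in> e} = e" using assms(3) by auto
    then show "(\<Sum>i\<in>A. (of_bool (i\<in>e)::nat)) = 2" using assms(1,3) \<open>e\<in>F\<close> by simp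
  qed
  finally show ?thesis by simp
qed

lemma count_edges:
  assumes "finite B" "card B \<le> w+1" "D \<subseteq> B" "\<forall>e\<in>Es. card e = 2 \<and> e \<subseteq> B \<and> e \<inter> D \<noteq> {}"
  shows "card Es \<le> w * card D"
proof -
  have fD: "finite D" using assms(1,3) finite_subset by blast
  have sub: "Es \<subseteq> (\<Union>d\<in>D. (\<lambda>x. {d,x}) ` (B - {d}))"
  proof
    fix e assume "e \<in> Es"
    then have c: "card e = 2" "e \<subseteq> B" "e \<inter> D \<noteq> {}" using assms(4) by auto
    then obtain a b where ab: "e = {a,b}" "a \<noteq> b" by (auto simp: card_2_iff)
    from c(3) obtain d where "d \<in> e" "d \<in> D" by auto
    then show "e \<in> (\<Union>d\<in>D. (\<lambda>x. {d,x}) ` (B - {d}))"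
      using ab c(2) by (auto simp: insert_commute)
  qed
  have fin: "finite (\<Union>d\<in>D. (\<lambda>x. {d,x}) ` (B - {d}))" using fD assms(1) by auto
  have "card Es \<le> card (\<Union>d\<in>D. (\<lambda>x. {d,x}) ` (B - {d}))" by (rule card_mono[OF fin sub])
  also have "\<dots> \<le> (\<Sum>d\<in>D. card ((\<lambda>x. {d,x}) ` (B - {d})))" by (rule card_UN_le[OF fD])
  also have "\<dots> \<le> (\<Sum>d\<in>D. w)"
  proof (rule sum_mono)
    fix d assume "d \<in> D"
    have "card ((\<lambda>x. {d,x}) ` (B - {d})) \<le> card (B - {d})" by (rule card_image_le) (use assms(1) in auto)
    also have "\<dots> = card B - 1" using \<open>d\<in>D\<close> assms(3) by (simp add: card_Diff_singleton subsetD)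
    finally show "card ((\<lambda>x. {d,x}) ` (B - {d})) \<le> w" using assms(2) by linarith
  qed
  finally show ?thesis by (simp add: mult.commute)
qed

lemma is_walk_Cons:
  "is_walk A F (a # r) \<longleftrightarrow> a \<in> A \<and> (r = [] \<or> ({a, hd r} \<in> F \<and> is_walk A F r))"
proof (cases r)
  case Nil then show ?thesis by (auto simp: is_walk_def)
next
  case (Cons b r')
  have "(\<forall>i. Suc i < length (a # r) \<longrightarrow> {(a#r) ! i, (a#r) ! Suc i} \<in> F) \<longleftrightarrow>
        {a, b} \<in> F \<and> (\<forall>i. Suc i < length r \<longrightarrow> {r ! i, r ! Suc i} \<in> F)"
  proof
    assume H: "\<forall>i. Suc i < length (a # r) \<longrightarrow> {(a#r) ! i, (a#r) ! Suc i} \<in> F"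
    show "{a, b} \<in> F \<and> (\<forall>i. Suc i < length r \<longrightarrow> {r ! i, r ! Suc i} \<in> F)"
    proof
      show "{a,b} \<in> F" using H[rule_format, of 0] Cons by simp
      show "\<forall>i. Suc i < length r \<longrightarrow> {r ! i, r ! Suc i} \<in> F"
        using H by (metis Suc_less_eq length_Cons nth_Cons_Suc)
    qed
  next
    assume H: "{a, b} \<in> F \<and> (\<forall>i. Suc i < length r \<longrightarrow> {r ! i, r ! Suc i} \<in> F)"
    show "\<forall>i. Suc i < length (a # r) \<longrightarrow> {(a#r) ! i, (a#r) ! Suc i} \<in> F"
    proof (intro allI impI)
      fix i assume "Suc i < length (a # r)"
      then show "{(a#r) ! i, (a#r) ! Suc i} \<in> F"
        using H Cons by (cases i) auto
    qed
  qed
  then show ?thesis using Cons by (auto simp: is_walk_def)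
qed

lemma walk_second:
  assumes "is_walk A F p" "hd p \<noteq> last p"
  shows "Suc 0 < length p \<and> {hd p, p ! 1} \<in> F"
proof -
  have "p \<noteq> []" using assms(1) by (auto simp: is_walk_def)
  moreover have "length p \<noteq> 1"
    using assms(2) by (metis One_nat_def hd_conv_nth last_conv_nth diff_Suc_1 \<open>p \<noteq> []\<close>)
  ultimately have "Suc 0 < length p" by (cases p) auto
  then show ?thesis using assms(1) \<open>p \<noteq> []\<close> unfolding is_walk_def by (auto simp: hd_conv_nth)
qed

lemma walk_avoid:
  assumes "is_walk A Fa p" "hd p \<noteq> l" "last p \<noteq> l" "\<forall>x. {x,l} \<in> Fa \<longrightarrow> x = q"
  shows "\<exists>r. is_walk (A - {l}) {e\<in>Fa. l\<notin>e} r \<and> hd r = hd p \<and> last r = last p"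
  using assms(1-3)
proof (induction "length p" arbitrary: p rule: less_induct)
  case less
  obtain a rest where p: "p = a # rest" using less.prems(1) by (cases p) (auto simp: is_walk_def)
  show ?case
  proof (cases rest)
    case Nil
    then show ?thesis using less.prems p by (intro exI[of _ "[a]"]) (auto simp: is_walk_def)
  next
    case (Cons b rest')
    have w: "a \<in> A" "{a,b} \<in> Fa" "is_walk A Fa rest" using less.prems(1) p Cons by (auto simp: is_walk_Cons)
    have al: "a \<noteq> l" using less.prems(2) p by simp
    show ?thesis
    proof (cases "b = l")
      case False
      have "last rest \<noteq> l" using less.prems(3) p Cons by simp
      then obtain r' where r': "is_walk (A - {l}) {e\<in>Fa. l\<notin>e} r'" "hd r' = b" "last r' = last rest"
        using less.hyps[of rest] w(3) p Cons False by auto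
      have "r' \<noteq> []" using r'(1) by (auto simp: is_walk_def)
      then show ?thesis using r' w al False p Cons
        by (intro exI[of _ "a # r'"]) (auto simp: is_walk_Cons)
    next
      case True
      then have aq: "a = q" using assms(4) w(2) by (auto simp: insert_commute)
      obtain c rest'' where rc: "rest' = c # rest''"
        using less.prems(3) p Cons True by (cases rest') auto
      have "{l, c} \<in> Fa" "is_walk A Fa rest'" using w(3) Cons rc True by (auto simp: is_walk_Cons)
      then have "c = q" using assms(4) by (auto simp: insert_commute)
      have "last rest' \<noteq> l" using less.prems(3) p Cons rc by simp
      then obtain r where r: "is_walk (A - {l}) {e\<in>Fa. l\<notin>e} r" "hd r = c" "last r = last rest'"
        using less.hyps[of rest'] \<open>is_walk A Fa rest'\<close> p Cons rc \<open>c = q\<close> aq al by auto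
      then show ?thesis using p Cons rc aq \<open>c = q\<close> by auto
    qed
  qed
qed


lemma td_edges:
  fixes I :: "'b set"
  assumes "tree_decomposition V E I F X" "simple_graph V E" "\<forall>i\<in>I. card (X i) \<le> w+1"
  shows "card E \<le> w * card V"
  using assms
proof (induction "card I" arbitrary: V E I F rule: less_induct)
  case less
  note td0 = less.prems(1)[unfolded tree_decomposition_def]
  have tdT: "is_tree I F" and tdX: "\<forall>i\<in>I. X i \<subseteq> V" and tdV: "\<forall>v\<in>V. \<exists>i\<in>I. v \<in> X i"
    and tdE: "\<forall>e\<in>E. \<exists>i\<in>I. e \<subseteq> X i"
    and tdC: "\<forall>v\<in>V. connected_graph {i\<in>I. v \<in> X i} (induced_edges F {i\<in>I. v \<in> X i})"
    using td0 by blast+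
  have tree: "finite I" "\<forall>e\<in>F. e \<subseteq> I \<and> card e = 2" "I \<noteq> {}" "connected_graph I F" "card F + 1 = card I"
    using tdT by (auto simp: is_tree_def simple_graph_def)
  have finV: "finite V" and Esub: "\<forall>e\<in>E. e \<subseteq> V \<and> card e = 2" using less.prems(2) by (auto simp: simple_graph_def)
  have finX: "\<And>i. i \<in> I \<Longrightarrow> finite (X i)" using tdX finV finite_subset by blast
  show ?case
  proof (cases "card I = 1")
    case True
    then obtain i where I: "I = {i}" by (auto simp: card_Suc_eq)
    have "V \<subseteq> X i" using tdV I by auto
    moreover have "\<forall>e\<in>E. card e = 2 \<and> e \<subseteq> X i \<and> e \<inter> V \<noteq> {}"
      using tdE I Esub by (fastforce simp: card_2_iff)
    ultimately show ?thesis
      using count_edges[of "X i" w V E] finX[of i] less.prems(3) I by auto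
  next
    case False
    with tree have c2: "card I \<ge> 2" by (cases "card I") auto
    have "F \<subseteq> Pow I" using tree(2) by auto
    then have finF: "finite F" using tree(1) finite_subset by (metis finite_Pow_iff)
    have deg1: "card {e\<in>F. i\<in>e} \<ge> 1" if "i \<in> I" for i
    proof -
      obtain j where "j \<in> I" "j \<noteq> i"
      proof -
        have "\<not> I \<subseteq> {i}"
        proof
          assume "I \<subseteq> {i}"
          then have "card I \<le> 1" using card_mono[of "{i}" I] by simp
          then show False using c2 by simp
        qed
        then show ?thesis using that by blast
      qed
      then obtain p where p: "is_walk I F p" "hd p = i" "last p = j"
        using tree(4) \<open>i\<in>I\<close> unfolding connected_graph_def by blast
      then have "{i, p ! 1} \<in> F" using walk_second[of I F p] \<open>j \<noteq> i\<close> by auto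
      then have "{e\<in>F. i\<in>e} \<noteq> {}" by auto
      moreover have "finite {e\<in>F. i\<in>e}" using finF by simp
      ultimately show ?thesis by (simp add: Suc_le_eq card_gt_0_iff)
    qed
    have hs: "(\<Sum>i\<in>I. card {e\<in>F. i\<in>e}) = 2 * card F" using handshake[OF tree(1) finF tree(2)] .
    have "\<exists>l\<in>I. card {e\<in>F. l\<in>e} = 1"
    proof (rule ccontr)
      assume na: "\<not> (\<exists>l\<in>I. card {e\<in>F. l\<in>e} = 1)"
      have "\<forall>i\<in>I. 2 \<le> card {e\<in>F. i\<in>e}"
      proof
        fix i assume "i \<in> I"
        then have "card {e\<in>F. i\<in>e} \<noteq> 1" "1 \<le> card {e\<in>F. i\<in>e}" using na deg1 by auto
        then show "2 \<le> card {e\<in>F. i\<in>e}" by linarith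
      qed
      then have "(\<Sum>i\<in>I. 2) \<le> (\<Sum>i\<in>I. card {e\<in>F. i\<in>e})" by (intro sum_mono) auto
      then show False using hs tree(5) by simp
    qed
    then obtain l where l: "l \<in> I" "card {e\<in>F. l\<in>e} = 1" by blast
    then obtain e0 where e0: "{e\<in>F. l\<in>e} = {e0}" by (auto simp: card_1_singleton_iff)
    then have "e0 \<in> F" "l \<in> e0" by auto
    have e0I: "e0 \<subseteq> I" "card e0 = 2" using tree(2) \<open>e0\<in>F\<close> by blast+
    then obtain a b where ab: "e0 = {a,b}" "a \<noteq> b" by (meson card_2_iff)
    obtain p where p: "e0 = {l, p}" "p \<noteq> l"
    proof (cases "l = a")
      case True then show ?thesis using ab that by auto
    next
      case False then have "l = b" using ab \<open>l\<in>e0\<close> by auto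
      then show ?thesis using ab that by (auto simp: insert_commute)
    qed
    have pI: "p \<in> I" using p(1) e0I(1) by auto
    have nbr: "\<forall>x. {x,l} \<in> F \<longrightarrow> x = p"
    proof (intro allI impI)
      fix x assume "{x,l} \<in> F"
      then have "{x,l} \<in> {e\<in>F. l\<in>e}" by simp
      then have "{x,l} = {l,p}" using e0 p(1) by simp
      then show "x = p" using p(2) by (metis doubleton_eq_iff)
    qed
    define D where "D = X l - X p"
    have Donly: "X j \<inter> D = {}" if "j \<in> I" "j \<noteq> l" for j
    proof (rule ccontr)
      assume "X j \<inter> D \<noteq> {}"
      then obtain v where v: "v \<in> X j" "v \<in> X l" "v \<notin> X p" unfolding D_def by auto
      have "v \<in> V" using tdX v(2) l(1) by auto
      let ?S = "{i\<in>I. v \<in> X i}"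
      have cS: "connected_graph ?S (induced_edges F ?S)" using tdC \<open>v\<in>V\<close> by blast
      have lS: "l \<in> ?S" and jS: "j \<in> ?S" using that v l(1) by auto
      obtain q where q: "is_walk ?S (induced_edges F ?S) q" "hd q = l" "last q = j"
        using cS lS jS unfolding connected_graph_def by blast
      have "hd q \<noteq> last q" using q(2,3) that(2) by simp
      then have "{hd q, q ! 1} \<in> induced_edges F ?S" using walk_second[OF q(1)] by blast
      then have i1: "{l, q ! 1} \<in> F" "{l, q ! 1} \<subseteq> ?S" using q(2) unfolding induced_edges_def by auto
      have "{q ! 1, l} \<in> F" using i1(1) by (simp add: insert_commute)
      then have "q ! 1 = p" using nbr by blast
      then have "q ! 1 = p" "q ! 1 \<in> ?S" using i1(2) by auto
      then show False using v(3) by auto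
    qed
    define V' where "V' = V - D"
    define E' where "E' = {e\<in>E. e \<inter> D = {}}"
    define I' where "I' = I - {l}"
    define F' where "F' = {e\<in>F. l \<notin> e}"
    have F'eq: "F' = F - {e0}" using e0 unfolding F'_def by auto
    have cardF': "card F' = card F - 1" using F'eq \<open>e0\<in>F\<close> finF by simp
    have cardI': "card I' = card I - 1" using I'_def l(1) tree(1) by simp
    have tree': "is_tree I' F'"
      unfolding is_tree_def simple_graph_def
    proof (intro conjI)
      show "finite I'" using tree(1) I'_def by simp
      show "\<forall>e\<in>F'. e \<subseteq> I' \<and> card e = 2" using tree(2) unfolding F'_def I'_def by auto
      show "I' \<noteq> {}" using pI p(2) I'_def by auto
      show "card F' + 1 = card I'" using cardF' cardI' tree(5) c2 by simp
      show "connected_graph I' F'"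
        unfolding connected_graph_def
      proof (intro ballI)
        fix u v assume "u \<in> I'" "v \<in> I'"
        then obtain q where "is_walk I F q" "hd q = u" "last q = v"
          using tree(4) unfolding connected_graph_def I'_def by blast
        then show "\<exists>q. is_walk I' F' q \<and> hd q = u \<and> last q = v"
          using walk_avoid[of I F q l p] nbr \<open>u\<in>I'\<close> \<open>v\<in>I'\<close> unfolding I'_def F'_def by auto
      qed
    qed
    have td': "tree_decomposition V' E' I' F' X"
      unfolding tree_decomposition_def
    proof (intro conjI tree')
      show "\<forall>i\<in>I'. X i \<subseteq> V'" using tdX Donly unfolding I'_def V'_def by blast
      show "\<forall>v\<in>V'. \<exists>i\<in>I'. v \<in> X i"
      proof
        fix v assume v: "v \<in> V'"
        then obtain j where "j \<in> I" "v \<in> X j" using tdV unfolding V'_def by auto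
        then show "\<exists>i\<in>I'. v \<in> X i"
          using v pI p(2) unfolding V'_def D_def I'_def by (cases "j = l") auto
      qed
      show "\<forall>e\<in>E'. \<exists>i\<in>I'. e \<subseteq> X i"
      proof
        fix e assume e: "e \<in> E'"
        then obtain j where "j \<in> I" "e \<subseteq> X j" using tdE unfolding E'_def by auto
        then show "\<exists>i\<in>I'. e \<subseteq> X i"
          using e pI p(2) unfolding E'_def D_def I'_def by (cases "j = l") auto
      qed
      show "\<forall>v\<in>V'. connected_graph {i\<in>I'. v \<in> X i} (induced_edges F' {i\<in>I'. v \<in> X i})"
      proof
        fix v assume v: "v \<in> V'"
        let ?S = "{i\<in>I. v \<in> X i}"
        have cS: "connected_graph ?S (induced_edges F ?S)" using tdC v unfolding V'_def by auto
        have eqS: "{i\<in>I'. v \<in> X i} = ?S - {l}" unfolding I'_def by auto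
        have eqF: "induced_edges F' {i\<in>I'. v \<in> X i} = {e \<in> induced_edges F ?S. l \<notin> e}"
          unfolding eqS F'_def induced_edges_def by auto
        have nbr': "\<forall>x. {x,l} \<in> induced_edges F ?S \<longrightarrow> x = p" using nbr by (auto simp: induced_edges_def)
        show "connected_graph {i\<in>I'. v \<in> X i} (induced_edges F' {i\<in>I'. v \<in> X i})"
          unfolding connected_graph_def eqF
        proof (intro ballI)
          fix a b assume ab: "a \<in> {i\<in>I'. v \<in> X i}" "b \<in> {i\<in>I'. v \<in> X i}"
          then obtain q where "is_walk ?S (induced_edges F ?S) q" "hd q = a" "last q = b"
            using cS unfolding connected_graph_def eqS by blast
          then show "\<exists>q. is_walk {i\<in>I'. v \<in> X i} {e \<in> induced_edges F ?S. l \<notin> e} q \<and> hd q = a \<and> last q = b"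
            using walk_avoid[of ?S _ q l p] nbr' ab unfolding eqS by auto
        qed
      qed
    qed
    have sg': "simple_graph V' E'" using less.prems(2) unfolding simple_graph_def V'_def E'_def by auto
    have IH: "card E' \<le> w * card V'"
      using less.hyps[of I' V' E' F'] td' sg' less.prems(3) cardI' c2 unfolding I'_def by auto
    define Ed where "Ed = {e\<in>E. e \<inter> D \<noteq> {}}"
    have DX: "D \<subseteq> X l" unfolding D_def by auto
    have "\<forall>e\<in>Ed. card e = 2 \<and> e \<subseteq> X l \<and> e \<inter> D \<noteq> {}"
    proof
      fix e assume e: "e \<in> Ed"
      then obtain j where j: "j \<in> I" "e \<subseteq> X j" using tdE unfolding Ed_def by auto
      have "j = l" using Donly[OF j(1)] j(2) e unfolding Ed_def by blast
      then show "card e = 2 \<and> e \<subseteq> X l \<and> e \<inter> D \<noteq> {}" using e j Esub unfolding Ed_def by auto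
    qed
    then have cEd: "card Ed \<le> w * card D"
      using count_edges[of "X l" w D Ed] finX[OF l(1)] less.prems(3) l(1) DX by auto
    have "E = E' \<union> Ed" unfolding E'_def Ed_def by auto
    then have "card E \<le> card E' + card Ed" by (simp add: card_Un_le)
    moreover have "card V = card V' + card D"
    proof -
      have "D \<subseteq> V" using DX tdX l(1) by auto
      then show ?thesis unfolding V'_def using finV
        by (metis card_Diff_subset card_mono finite_subset le_add_diff_inverse2)
    qed
    ultimately show ?thesis using IH cEd by (simp add: add_mult_distrib2)
  qed
qed


lemma tw_edges:
  assumes "simple_graph V E"
  shows "card E \<le> treewidth V E * card V"
proof -
  let ?P = "\<lambda>w. \<exists>(I::nat set) F X. tree_decomposition V E I F X \<and> td_width I X = w"
  have ex: "\<exists>w. ?P w"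
  proof -
    have "is_walk {0::nat} {} [0]" by (simp add: is_walk_def)
    then have cg: "connected_graph {0::nat} {}" by (auto simp: connected_graph_def)
    have tr: "is_tree {0::nat} {}" using cg by (simp add: is_tree_def simple_graph_def)
    have "tree_decomposition V E {0::nat} {} (\<lambda>_. V)"
      unfolding tree_decomposition_def
    proof (intro conjI tr)
      show "\<forall>e\<in>E. \<exists>i\<in>{0::nat}. e \<subseteq> V" using assms by (auto simp: simple_graph_def)
      have "{i\<in>{0::nat}. v \<in> V} = {0}" if "v \<in> V" for v using that by auto
      moreover have "induced_edges {} S = {}" for S :: "nat set" by (simp add: induced_edges_def)
      ultimately show "\<forall>v\<in>V. connected_graph {i\<in>{0::nat}. v \<in> V} (induced_edges {} {i\<in>{0::nat}. v \<in> V})"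
        using cg by auto
    qed auto
    then show ?thesis by blast
  qed
  have "?P (treewidth V E)" unfolding treewidth_def by (rule LeastI_ex[OF ex])
  then obtain I :: "nat set" and F X where td: "tree_decomposition V E I F X" and wd: "td_width I X = treewidth V E"
    by blast
  have finI: "finite I" using td by (simp add: tree_decomposition_def is_tree_def simple_graph_def)
  have "\<forall>i\<in>I. card (X i) \<le> treewidth V E + 1"
  proof
    fix i assume "i \<in> I"
    then have "card (X i) \<le> Max ((\<lambda>i. card (X i)) ` I)" using finI by (intro Max_ge) auto
    then show "card (X i) \<le> treewidth V E + 1" using wd unfolding td_width_def by linarith
  qed
  then show ?thesis using td_edges[OF td assms] by blast
qed


lemma compl_mem:
  assumes "u \<in> V"
  shows "{x,u} \<in> complement_edges V E \<longleftrightarrow> x \<in> V \<and> x \<noteq> u \<and> {x,u} \<notin> E"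
proof
  assume "{x,u} \<in> complement_edges V E"
  then obtain a b where "{x,u} = {a,b}" "a \<in> V" "b \<in> V" "a \<noteq> b" "{x,u} \<notin> E"
    unfolding complement_edges_def by blast
  then show "x \<in> V \<and> x \<noteq> u \<and> {x,u} \<notin> E" by (auto simp: doubleton_eq_iff)
next
  assume "x \<in> V \<and> x \<noteq> u \<and> {x,u} \<notin> E"
  then show "{x,u} \<in> complement_edges V E" using assms unfolding complement_edges_def by blast
qed

lemma nbH:
  assumes "u \<in> V"
  shows "neighbors (complement_edges V E) u = {x\<in>V. x \<noteq> u \<and> x \<notin> neighbors E u}"
  using compl_mem[OF assms, of _ E] unfolding neighbors_def by auto

lemma deg_sum:
  assumes "simple_graph V E" "v \<in> V"
  shows "card V - 1 \<le> degree E v + degree (complement_edges V E) v"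
proof -
  have finV: "finite V" using assms(1) by (simp add: simple_graph_def)
  have "E \<subseteq> Pow V" using assms(1) by (auto simp: simple_graph_def)
  then have fE: "finite E" using finV by (metis finite_Pow_iff finite_subset)
  have "complement_edges V E \<subseteq> Pow V" unfolding complement_edges_def by auto
  then have fH: "finite (complement_edges V E)" using finV by (metis finite_Pow_iff finite_subset)
  have sub: "(\<lambda>x. {x,v}) ` (V - {v}) \<subseteq> {e\<in>E. v\<in>e} \<union> {e\<in>complement_edges V E. v\<in>e}"
    using compl_mem[OF assms(2), of _ E] by auto
  have inj: "inj_on (\<lambda>x. {x,v}) (V - {v})" by (auto simp: inj_on_def doubleton_eq_iff)
  have "card V - 1 = card ((\<lambda>x. {x,v}) ` (V - {v}))"
    using card_image[OF inj] assms(2) finV by simp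
  also have "\<dots> \<le> card ({e\<in>E. v\<in>e} \<union> {e\<in>complement_edges V E. v\<in>e})"
    by (rule card_mono) (use fE fH sub in auto)
  also have "\<dots> \<le> degree E v + degree (complement_edges V E) v"
    unfolding degree_def by (rule card_Un_le)
  finally show ?thesis .
qed

theorem theorem2:
  fixes V :: "'a set" and E :: "'a set set" and n w :: nat
  assumes "simple_graph V E"
    and "card V = n"
    and "treewidth V E = w"
    and "\<forall>u\<in>V. \<forall>v\<in>V. u \<noteq> v \<longrightarrow> {u, v} \<notin> complement_edges V E \<longrightarrow>
           degree (complement_edges V E) u + degree (complement_edges V E) v < n"
  shows "neighborhood_diversity V (complement_edges V E) \<le> 2 ^ (2 * (w^2 + w)) + 2 * (w^2 + w)"
proof -
  define H where "H = complement_edges V E"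
  define k where "k = 2 * (w^2 + w)"
  have finV: "finite V" using assms(1) by (simp add: simple_graph_def)
  have Esub: "\<forall>e\<in>E. e \<subseteq> V \<and> card e = 2" using assms(1) by (simp add: simple_graph_def)
  have "E \<subseteq> Pow V" using Esub by auto
  then have fE: "finite E" using finV by (metis finite_Pow_iff finite_subset)
  have cE: "card E \<le> w * n" using tw_edges[OF assms(1)] assms(2,3) by simp
  have ndle: "neighborhood_diversity V H \<le> card P" if "nd_partition V H P" for P
    unfolding neighborhood_diversity_def using that by (intro Least_le) blast
  show ?thesis
  proof (cases "n \<le> 2 ^ k + k")
    case True
    have "nd_partition V H ((\<lambda>v. {v}) ` V)" unfolding nd_partition_def by auto
    then have "neighborhood_diversity V H \<le> card ((\<lambda>v. {v}) ` V)" by (rule ndle)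
    also have "\<dots> \<le> n" using card_image_le[OF finV] assms(2) by metis
    finally show ?thesis using True unfolding H_def k_def by simp
  next
    case False
    have "k < 2 ^ k" by (rule less_exp)
    then have n1: "n \<ge> 2 * k + 2" using False by linarith
    have "2 * w \<le> k" unfolding k_def by simp
    then have nbig: "n \<ge> 4 * w + 2" using n1 by linarith
    define S where "S = {v\<in>V. 2 * degree H v < n}"
    have cover: "x \<in> S \<or> u \<in> S" if "u \<in> V" "x \<in> V" "x \<noteq> u" "{x,u} \<in> E" for u x
    proof -
      have "{x,u} \<notin> H" using that unfolding H_def complement_edges_def by auto
      then have "degree H x + degree H u < n" using assms(4) that unfolding H_def by blast
      then show ?thesis using that unfolding S_def by auto
    qed
    have Sbig: "n - 1 \<le> 2 * degree E v" if "v \<in> S" for v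
    proof -
      have "v \<in> V" "2 * degree H v < n" using that unfolding S_def by auto
      moreover have "n - 1 \<le> degree E v + degree H v"
        using deg_sum[OF assms(1) \<open>v\<in>V\<close>] assms(2) unfolding H_def by simp
      ultimately show ?thesis by linarith
    qed
    have SV: "S \<subseteq> V" unfolding S_def by auto
    have finS: "finite S" using SV finV finite_subset by blast
    have "card S * (n - 1) = (\<Sum>v\<in>S. n - 1)" by simp
    also have "\<dots> \<le> (\<Sum>v\<in>S. 2 * degree E v)" using Sbig by (intro sum_mono) auto
    also have "\<dots> \<le> (\<Sum>v\<in>V. 2 * degree E v)" using SV finV by (intro sum_mono2) auto
    also have "\<dots> = 2 * (\<Sum>v\<in>V. card {e\<in>E. v\<in>e})" unfolding degree_def by (simp add: sum_distrib_left)
    also have "\<dots> = 4 * card E" using handshake[OF finV fE Esub] by simp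
    also have "\<dots> \<le> 4 * w * n" using cE by simp
    finally have sn: "card S * (n - 1) \<le> 4 * w * n" .
    have cS: "card S \<le> 4 * w"
    proof (rule ccontr)
      assume "\<not> card S \<le> 4 * w"
      then have "(4 * w + 1) * (n - 1) \<le> card S * (n - 1)" by (intro mult_right_mono) auto
      with sn have "(4 * w + 1) * (n - 1) \<le> 4 * w * n" by linarith
      moreover obtain m where "n = Suc m" using nbig by (cases n) auto
      ultimately have "(4 * w + 1) * m \<le> 4 * w * (m + 1)" by simp
      then have "m \<le> 4 * w" by (simp add: algebra_simps)
      then show False using nbig \<open>n = Suc m\<close> by simp
    qed
    have nbS: "neighbors E u \<subseteq> S" if "u \<in> V - S" for u
    proof
      fix x assume "x \<in> neighbors E u"
      then have "{x,u} \<in> E" "x \<noteq> u" unfolding neighbors_def by auto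
      moreover then have "x \<in> V" using Esub by blast
      ultimately show "x \<in> S" using cover[of u x] that by auto
    qed
    define cls where "cls v = {u\<in>V - S. neighbors E u = neighbors E v}" for v
    define P where "P = (\<lambda>v. {v}) ` S \<union> cls ` (V - S)"
    have part: "nd_partition V H P"
      unfolding nd_partition_def
    proof (intro conjI)
      show "\<forall>C\<in>P. C \<noteq> {}" unfolding P_def cls_def by auto
      show "\<Union> P = V" unfolding P_def cls_def using SV by auto
      show "\<forall>C\<in>P. \<forall>D\<in>P. C \<noteq> D \<longrightarrow> C \<inter> D = {}" unfolding P_def cls_def by auto
      show "\<forall>C\<in>P. \<forall>v\<in>C. \<forall>v'\<in>C. neighbors H v - {v'} = neighbors H v' - {v}"
      proof (intro ballI)
        fix C v v' assume C: "C \<in> P" and vv: "v \<in> C" "v' \<in> C"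
        show "neighbors H v - {v'} = neighbors H v' - {v}"
        proof (cases "v = v'")
          case True then show ?thesis by simp
        next
          case False
          then obtain u where "C = cls u" using C vv unfolding P_def by auto
          then have "v \<in> V" "v' \<in> V" "neighbors E v = neighbors E v'" using vv unfolding cls_def by auto
          then show ?thesis unfolding H_def using nbH[of v V E] nbH[of v' V E] by auto
        qed
      qed
    qed
    have "card P \<le> card ((\<lambda>v. {v}) ` S) + card (cls ` (V - S))" unfolding P_def by (rule card_Un_le)
    also have "\<dots> \<le> card S + 2 ^ card S"
    proof (rule add_mono)
      show "card ((\<lambda>v. {v}) ` S) \<le> card S" by (rule card_image_le[OF finS])
      have "cls ` (V - S) = (\<lambda>T. {u\<in>V - S. neighbors E u = T}) ` (neighbors E ` (V - S))"
        unfolding cls_def by auto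
      also have "card \<dots> \<le> card (neighbors E ` (V - S))" by (rule card_image_le) (use finV in auto)
      also have "\<dots> \<le> card (Pow S)" by (rule card_mono) (use finS nbS in auto)
      also have "\<dots> = 2 ^ card S" using finS by (simp add: card_Pow)
      finally show "card (cls ` (V - S)) \<le> 2 ^ card S" .
    qed
    also have "\<dots> \<le> k + 2 ^ k"
    proof -
      have "4 * w \<le> k" unfolding k_def by (simp add: power2_eq_square le_square)
      then have "card S \<le> k" using cS by simp
      then show ?thesis by (simp add: add_mono)
    qed
    finally have "card P \<le> 2 ^ k + k" by simp
    then show ?thesis using ndle[OF part] unfolding H_def k_def by simp
  qed
qed

end
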